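(* Let $S$ be an abundant semigroup with a quasi-ideal adequate transversal $S^0$, let $R=\{x\in S:e_x=e_{\bar x}\}$, $L=\{x\in S:f_x=f_{\bar x}\}$ and $T=\{(x,a)\in L\times R:\bar x=\bar a\}$, equipped with the multiplication $(x,a)(y,b)=(e_xay,\,ayf_b)$ (products computed in $S$; this multiplication is well defined, i.e. its values lie in $T$). Then $T$ is an abundant semigroup and $T\cong S$.
   Context: For a semigroup $S$, $\mathcal{R}^\ast=\{(a,b): \text{for all } x,y\in S^1,\ xa=ya \iff xb=yb\}$ and $\mathcal{L}^\ast$ dually. $S$ is abundant if every $\mathcal{R}^\ast$-class and $\mathcal{L}^\ast$-class contains an idempotent; adequate if abundant with commuting idempotents. In an adequate semigroup $a^+,a^\ast$ are the unique idempotents $\mathcal{R}^\ast$-, resp. $\mathcal{L}^\ast$-related to $a$. A subsemigroup $U$ of abundant $S$ is a $\ast$-subsemigroup if $U$ is abundant and $\mathcal{L}^\ast_U=\mathcal{L}^\ast_S\cap(U\times U)$, $\mathcal{R}^\ast_U=\mathcal{R}^\ast_S\cap(U\times U)$. An adequate $\ast$-subsemigroup $S^0$ of abundant $S$ is an adequate transversal if for each $x\in S$ there is a unique $\bar x\in S^0$ and idempotents $e,f$ of $S$ with $x=e\bar xf$, $e\,\mathcal{L}\,\bar x^+$, $f\,\mathcal{R}\,\bar x^\ast$; these $e,f$ are unique and denoted $e_x,f_x$. It is a quasi-ideal adequate transversal if moreover $S^0SS^0\subseteq S^0$. *)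

theory Defs
  imports Main
begin

definition semigroup_on :: "'a set \<Rightarrow> ('a \<Rightarrow> 'a \<Rightarrow> 'a) \<Rightarrow> bool" where
  "semigroup_on S m \<longleftrightarrow> (\<forall>a\<in>S. \<forall>b\<in>S. m a b \<in> S) \<and>
     (\<forall>a\<in>S. \<forall>b\<in>S. \<forall>c\<in>S. m (m a b) c = m a (m b c))"

definition idems :: "'a set \<Rightarrow> ('a \<Rightarrow> 'a \<Rightarrow> 'a) \<Rightarrow> 'a set" where
  "idems S m = {e \<in> S. m e e = e}"

text \<open>R-star: for all x,y in S^1, xa = ya iff xb = yb (the cases involving the
  adjoined identity are written out explicitly).\<close>
definition Rstar :: "'a set \<Rightarrow> ('a \<Rightarrow> 'a \<Rightarrow> 'a) \<Rightarrow> ('a \<times> 'a) set" where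
  "Rstar S m = {(a, b). a \<in> S \<and> b \<in> S \<and>
     (\<forall>x\<in>S. \<forall>y\<in>S. m x a = m y a \<longleftrightarrow> m x b = m y b) \<and>
     (\<forall>x\<in>S. m x a = a \<longleftrightarrow> m x b = b)}"

definition Lstar :: "'a set \<Rightarrow> ('a \<Rightarrow> 'a \<Rightarrow> 'a) \<Rightarrow> ('a \<times> 'a) set" where
  "Lstar S m = {(a, b). a \<in> S \<and> b \<in> S \<and>
     (\<forall>x\<in>S. \<forall>y\<in>S. m a x = m a y \<longleftrightarrow> m b x = m b y) \<and>
     (\<forall>x\<in>S. m a x = a \<longleftrightarrow> m b x = b)}"

text \<open>Green's relations: a L b iff S^1 a = S^1 b; a R b iff a S^1 = b S^1.\<close>
definition GreenL :: "'a set \<Rightarrow> ('a \<Rightarrow> 'a \<Rightarrow> 'a) \<Rightarrow> ('a \<times> 'a) set" where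
  "GreenL S m = {(a, b). a \<in> S \<and> b \<in> S \<and>
     (a = b \<or> (\<exists>s\<in>S. a = m s b)) \<and> (b = a \<or> (\<exists>t\<in>S. b = m t a))}"

definition GreenR :: "'a set \<Rightarrow> ('a \<Rightarrow> 'a \<Rightarrow> 'a) \<Rightarrow> ('a \<times> 'a) set" where
  "GreenR S m = {(a, b). a \<in> S \<and> b \<in> S \<and>
     (a = b \<or> (\<exists>s\<in>S. a = m b s)) \<and> (b = a \<or> (\<exists>t\<in>S. b = m a t))}"

definition abundant :: "'a set \<Rightarrow> ('a \<Rightarrow> 'a \<Rightarrow> 'a) \<Rightarrow> bool" where
  "abundant S m \<longleftrightarrow> semigroup_on S m \<and>
     (\<forall>a\<in>S. \<exists>e\<in>idems S m. (a, e) \<in> Rstar S m) \<and>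
     (\<forall>a\<in>S. \<exists>e\<in>idems S m. (a, e) \<in> Lstar S m)"

definition adequate :: "'a set \<Rightarrow> ('a \<Rightarrow> 'a \<Rightarrow> 'a) \<Rightarrow> bool" where
  "adequate S m \<longleftrightarrow> abundant S m \<and>
     (\<forall>e\<in>idems S m. \<forall>f\<in>idems S m. m e f = m f e)"

definition aplus :: "'a set \<Rightarrow> ('a \<Rightarrow> 'a \<Rightarrow> 'a) \<Rightarrow> 'a \<Rightarrow> 'a" where
  "aplus U m a = (THE e. e \<in> idems U m \<and> (a, e) \<in> Rstar U m)"

definition astar :: "'a set \<Rightarrow> ('a \<Rightarrow> 'a \<Rightarrow> 'a) \<Rightarrow> 'a \<Rightarrow> 'a" where
  "astar U m a = (THE e. e \<in> idems U m \<and> (a, e) \<in> Lstar U m)"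

definition star_subsemigroup :: "'a set \<Rightarrow> 'a set \<Rightarrow> ('a \<Rightarrow> 'a \<Rightarrow> 'a) \<Rightarrow> bool" where
  "star_subsemigroup U S m \<longleftrightarrow> U \<subseteq> S \<and> abundant U m \<and>
     Lstar U m = Lstar S m \<inter> (U \<times> U) \<and> Rstar U m = Rstar S m \<inter> (U \<times> U)"

definition transversal_decomp :: "'a set \<Rightarrow> 'a set \<Rightarrow> ('a \<Rightarrow> 'a \<Rightarrow> 'a) \<Rightarrow> 'a \<Rightarrow> 'a \<Rightarrow> 'a \<Rightarrow> 'a \<Rightarrow> bool" where
  "transversal_decomp S0 S m x xb e f \<longleftrightarrow> xb \<in> S0 \<and> e \<in> idems S m \<and> f \<in> idems S m \<and>
     x = m (m e xb) f \<and> (e, aplus S0 m xb) \<in> GreenL S m \<and> (f, astar S0 m xb) \<in> GreenR S m"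

definition adequate_transversal :: "'a set \<Rightarrow> 'a set \<Rightarrow> ('a \<Rightarrow> 'a \<Rightarrow> 'a) \<Rightarrow> bool" where
  "adequate_transversal S0 S m \<longleftrightarrow> abundant S m \<and> adequate S0 m \<and> star_subsemigroup S0 S m \<and>
     (\<forall>x\<in>S. \<exists>!xb. \<exists>e f. transversal_decomp S0 S m x xb e f)"

definition quasi_ideal_adequate_transversal :: "'a set \<Rightarrow> 'a set \<Rightarrow> ('a \<Rightarrow> 'a \<Rightarrow> 'a) \<Rightarrow> bool" where
  "quasi_ideal_adequate_transversal S0 S m \<longleftrightarrow> adequate_transversal S0 S m \<and>
     (\<forall>a\<in>S0. \<forall>s\<in>S. \<forall>b\<in>S0. m (m a s) b \<in> S0)"

definition tbar :: "'a set \<Rightarrow> 'a set \<Rightarrow> ('a \<Rightarrow> 'a \<Rightarrow> 'a) \<Rightarrow> 'a \<Rightarrow> 'a" where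
  "tbar S0 S m x = (THE xb. \<exists>e f. transversal_decomp S0 S m x xb e f)"

definition te :: "'a set \<Rightarrow> 'a set \<Rightarrow> ('a \<Rightarrow> 'a \<Rightarrow> 'a) \<Rightarrow> 'a \<Rightarrow> 'a" where
  "te S0 S m x = (THE e. \<exists>f. transversal_decomp S0 S m x (tbar S0 S m x) e f)"

definition tf :: "'a set \<Rightarrow> 'a set \<Rightarrow> ('a \<Rightarrow> 'a \<Rightarrow> 'a) \<Rightarrow> 'a \<Rightarrow> 'a" where
  "tf S0 S m x = (THE f. \<exists>e. transversal_decomp S0 S m x (tbar S0 S m x) e f)"

definition Rset :: "'a set \<Rightarrow> 'a set \<Rightarrow> ('a \<Rightarrow> 'a \<Rightarrow> 'a) \<Rightarrow> 'a set" where
  "Rset S0 S m = {x \<in> S. te S0 S m x = te S0 S m (tbar S0 S m x)}"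

definition Lset :: "'a set \<Rightarrow> 'a set \<Rightarrow> ('a \<Rightarrow> 'a \<Rightarrow> 'a) \<Rightarrow> 'a set" where
  "Lset S0 S m = {x \<in> S. tf S0 S m x = tf S0 S m (tbar S0 S m x)}"

definition Tset :: "'a set \<Rightarrow> 'a set \<Rightarrow> ('a \<Rightarrow> 'a \<Rightarrow> 'a) \<Rightarrow> ('a \<times> 'a) set" where
  "Tset S0 S m = {(x, a). x \<in> Lset S0 S m \<and> a \<in> Rset S0 S m \<and> tbar S0 S m x = tbar S0 S m a}"

definition Tmult :: "'a set \<Rightarrow> 'a set \<Rightarrow> ('a \<Rightarrow> 'a \<Rightarrow> 'a) \<Rightarrow> ('a \<times> 'a) \<Rightarrow> ('a \<times> 'a) \<Rightarrow> ('a \<times> 'a)" where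
  "Tmult S0 S m p q = (case p of (x, a) \<Rightarrow> case q of (y, b) \<Rightarrow>
     (m (m (te S0 S m x) a) y, m (m a y) (tf S0 S m b)))"

end

theory Submission
  imports Defs
begin


lemma abundant_transfer:
  fixes T :: "'b set" and mT :: "'b \<Rightarrow> 'b \<Rightarrow> 'b" and S :: "'a set" and m
  assumes ab: "abundant S m" and bij: "bij_betw \<phi> T S"
    and cl: "\<forall>p\<in>T. \<forall>q\<in>T. mT p q \<in> T"
    and hom: "\<forall>p\<in>T. \<forall>q\<in>T. \<phi> (mT p q) = m (\<phi> p) (\<phi> q)"
  shows "abundant T mT"
proof -
  have sg: "semigroup_on S m" using ab by (simp add: abundant_def)
  have inj: "inj_on \<phi> T" and im: "\<phi> ` T = S" using bij by (auto simp: bij_betw_def)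
  have inS: "p \<in> T \<Longrightarrow> \<phi> p \<in> S" for p using im by blast
  have eq: "p \<in> T \<Longrightarrow> q \<in> T \<Longrightarrow> \<phi> p = \<phi> q \<longleftrightarrow> p = q" for p q
    using inj by (meson inj_on_eq_iff)
  have sgT: "semigroup_on T mT"
    unfolding semigroup_on_def
  proof (intro conjI ballI)
    fix a b assume "a \<in> T" "b \<in> T" then show "mT a b \<in> T" using cl by blast
  next
    fix a b c assume h: "a \<in> T" "b \<in> T" "c \<in> T"
    have ab: "mT a b \<in> T" and bc: "mT b c \<in> T" using h cl by blast+
    have "\<phi> (mT (mT a b) c) = m (m (\<phi> a) (\<phi> b)) (\<phi> c)"
      using hom ab h by metis
    also have "\<dots> = m (\<phi> a) (m (\<phi> b) (\<phi> c))"
      using sg inS h unfolding semigroup_on_def by blast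
    also have "\<dots> = \<phi> (mT a (mT b c))"
      using hom bc h by metis
    finally have "\<phi> (mT (mT a b) c) = \<phi> (mT a (mT b c))" .
    moreover have "mT (mT a b) c \<in> T" "mT a (mT b c) \<in> T" using ab bc h cl by blast+
    ultimately show "mT (mT a b) c = mT a (mT b c)" using eq by blast
  qed
  have R: "\<exists>e\<in>idems T mT. (p, e) \<in> Rstar T mT" if p: "p \<in> T" for p
  proof -
    obtain e where e: "e \<in> idems S m" "(\<phi> p, e) \<in> Rstar S m" using ab inS[OF p] unfolding abundant_def by blast
    obtain q where q: "q \<in> T" "\<phi> q = e" using e(1) im unfolding idems_def by blast
    have qq: "mT q q \<in> T" using q cl by blast
    have "\<phi> (mT q q) = m (\<phi> q) (\<phi> q)" using q hom by blast
    also have "\<dots> = \<phi> q" using q e(1) unfolding idems_def by simp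
    finally have "mT q q = q" using eq[OF qq q(1)] by blast
    then have "q \<in> idems T mT" using q unfolding idems_def by blast
    moreover have "(p, q) \<in> Rstar T mT"
    proof -
      have A: "mT x p = mT y p \<longleftrightarrow> mT x q = mT y q" if "x \<in> T" "y \<in> T" for x y
      proof -
        have "m (\<phi> x) (\<phi> p) = m (\<phi> y) (\<phi> p) \<longleftrightarrow> m (\<phi> x) e = m (\<phi> y) e" using e(2) that inS unfolding Rstar_def by blast
        then show ?thesis using that p q hom cl eq[symmetric] by (simp add: eq[symmetric])
      qed
      have B: "mT x p = p \<longleftrightarrow> mT x q = q" if "x \<in> T" for x
      proof -
        have "m (\<phi> x) (\<phi> p) = \<phi> p \<longleftrightarrow> m (\<phi> x) e = e" using e(2) that inS unfolding Rstar_def by blast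
        then show ?thesis using that p q hom cl by (metis eq)
      qed
      show ?thesis using A B p q unfolding Rstar_def by blast
    qed
    ultimately show ?thesis by blast
  qed
  have L: "\<exists>e\<in>idems T mT. (p, e) \<in> Lstar T mT" if p: "p \<in> T" for p
  proof -
    obtain e where e: "e \<in> idems S m" "(\<phi> p, e) \<in> Lstar S m" using ab inS[OF p] unfolding abundant_def by blast
    obtain q where q: "q \<in> T" "\<phi> q = e" using e(1) im unfolding idems_def by blast
    have qq: "mT q q \<in> T" using q cl by blast
    have "\<phi> (mT q q) = m (\<phi> q) (\<phi> q)" using q hom by blast
    also have "\<dots> = \<phi> q" using q e(1) unfolding idems_def by simp
    finally have "mT q q = q" using eq[OF qq q(1)] by blast
    then have "q \<in> idems T mT" using q unfolding idems_def by blast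
    moreover have "(p, q) \<in> Lstar T mT"
    proof -
      have A: "mT p x = mT p y \<longleftrightarrow> mT q x = mT q y" if "x \<in> T" "y \<in> T" for x y
      proof -
        have "m (\<phi> p) (\<phi> x) = m (\<phi> p) (\<phi> y) \<longleftrightarrow> m e (\<phi> x) = m e (\<phi> y)" using e(2) that inS unfolding Lstar_def by blast
        then show ?thesis using that p q hom cl eq[symmetric] by (simp add: eq[symmetric])
      qed
      have B: "mT p x = p \<longleftrightarrow> mT q x = q" if "x \<in> T" for x
      proof -
        have "m (\<phi> p) (\<phi> x) = \<phi> p \<longleftrightarrow> m e (\<phi> x) = e" using e(2) that inS unfolding Lstar_def by blast
        then show ?thesis using that p q hom cl by (metis eq)
      qed
      show ?thesis using A B p q unfolding Lstar_def by blast
    qed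
    ultimately show ?thesis by blast
  qed
  show ?thesis using sgT R L unfolding abundant_def by blast
qed



locale QT =
  fixes S S0 :: "'a set" and m :: "'a \<Rightarrow> 'a \<Rightarrow> 'a" (infixl "\<cdot>" 70)
  assumes abS: "abundant S m" and qt: "quasi_ideal_adequate_transversal S0 S m"
begin

abbreviation pl where "pl a \<equiv> aplus S0 m a"
abbreviation st where "st a \<equiv> astar S0 m a"
abbreviation td where "td \<equiv> transversal_decomp S0 S m"
abbreviation bar where "bar \<equiv> tbar S0 S m"
abbreviation ee where "ee \<equiv> te S0 S m"
abbreviation ff where "ff \<equiv> tf S0 S m"

lemma sg[simp]: "a \<in> S \<Longrightarrow> b \<in> S \<Longrightarrow> a \<cdot> b \<in> S"
  using abS by (simp add: abundant_def semigroup_on_def)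
lemma assoc: "a \<in> S \<Longrightarrow> b \<in> S \<Longrightarrow> c \<in> S \<Longrightarrow> a \<cdot> b \<cdot> c = a \<cdot> (b \<cdot> c)"
  using abS by (simp add: abundant_def semigroup_on_def)

lemma at: "adequate_transversal S0 S m" using qt by (simp add: quasi_ideal_adequate_transversal_def)
lemma adS0: "adequate S0 m" using at by (simp add: adequate_transversal_def)
lemma abS0: "abundant S0 m" using adS0 by (simp add: adequate_def)
lemma ssub: "star_subsemigroup S0 S m" using at by (simp add: adequate_transversal_def)
lemma S0S: "a \<in> S0 \<Longrightarrow> a \<in> S" using ssub by (auto simp: star_subsemigroup_def)
lemma sg0: "a \<in> S0 \<Longrightarrow> b \<in> S0 \<Longrightarrow> a \<cdot> b \<in> S0"
  using abS0 by (simp add: abundant_def semigroup_on_def)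
lemma comm: "e \<in> idems S0 m \<Longrightarrow> f \<in> idems S0 m \<Longrightarrow> e \<cdot> f = f \<cdot> e"
  using adS0 by (simp add: adequate_def)
lemma qi: "a \<in> S0 \<Longrightarrow> s \<in> S \<Longrightarrow> b \<in> S0 \<Longrightarrow> a \<cdot> s \<cdot> b \<in> S0"
  using qt by (simp add: quasi_ideal_adequate_transversal_def)
lemma uniq: "x \<in> S \<Longrightarrow> \<exists>!xb. \<exists>e f. td x xb e f"
  using at by (simp add: adequate_transversal_def)

lemma pl_props: assumes a: "a \<in> S0" shows "pl a \<in> idems S0 m \<and> (a, pl a) \<in> Rstar S0 m"
proof -
  obtain e where e: "e \<in> idems S0 m" "(a, e) \<in> Rstar S0 m" using abS0 a unfolding abundant_def by blast
  have u: "e' = e" if "e' \<in> idems S0 m" "(a, e') \<in> Rstar S0 m" for e'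
  proof -
    have "e \<cdot> e' = e'" using e that unfolding Rstar_def idems_def by blast
    moreover have "e' \<cdot> e = e" using e that unfolding Rstar_def idems_def by blast
    moreover have "e \<cdot> e' = e' \<cdot> e" using comm e that by blast
    ultimately show ?thesis by simp
  qed
  have "pl a = e" unfolding aplus_def using e u by (intro the_equality) blast+
  then show ?thesis using e by simp
qed

lemma st_props: assumes a: "a \<in> S0" shows "st a \<in> idems S0 m \<and> (a, st a) \<in> Lstar S0 m"
proof -
  obtain e where e: "e \<in> idems S0 m" "(a, e) \<in> Lstar S0 m" using abS0 a unfolding abundant_def by blast
  have u: "e' = e" if "e' \<in> idems S0 m" "(a, e') \<in> Lstar S0 m" for e'
  proof -
    have "e' \<cdot> e = e'" using e that unfolding Lstar_def idems_def by blast
    moreover have "e \<cdot> e' = e" using e that unfolding Lstar_def idems_def by blast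
    moreover have "e \<cdot> e' = e' \<cdot> e" using comm e that by blast
    ultimately show ?thesis by simp
  qed
  have "st a = e" unfolding astar_def using e u by (intro the_equality) blast+
  then show ?thesis using e by simp
qed

lemma plI: "a \<in> S0 \<Longrightarrow> pl a \<in> idems S0 m" using pl_props by blast
lemma stI: "a \<in> S0 \<Longrightarrow> st a \<in> idems S0 m" using st_props by blast
lemma pl0: "a \<in> S0 \<Longrightarrow> pl a \<in> S0" using pl_props by (simp add: idems_def)
lemma st0: "a \<in> S0 \<Longrightarrow> st a \<in> S0" using st_props by (simp add: idems_def)
lemma plS: "a \<in> S0 \<Longrightarrow> pl a \<in> S" using pl0 S0S by blast
lemma stS: "a \<in> S0 \<Longrightarrow> st a \<in> S" using st0 S0S by blast
lemma pl_idem: "a \<in> S0 \<Longrightarrow> pl a \<cdot> pl a = pl a" using pl_props by (simp add: idems_def)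
lemma st_idem: "a \<in> S0 \<Longrightarrow> st a \<cdot> st a = st a" using st_props by (simp add: idems_def)
lemma pl_a: "a \<in> S0 \<Longrightarrow> pl a \<cdot> a = a"
  using pl_props[of a] unfolding Rstar_def idems_def by blast
lemma a_st: "a \<in> S0 \<Longrightarrow> a \<cdot> st a = a"
  using st_props[of a] unfolding Lstar_def idems_def by blast
lemma plR: "a \<in> S0 \<Longrightarrow> x \<in> S \<Longrightarrow> y \<in> S \<Longrightarrow> x \<cdot> a = y \<cdot> a \<longleftrightarrow> x \<cdot> pl a = y \<cdot> pl a"
proof -
  assume a: "a \<in> S0" and xy: "x \<in> S" "y \<in> S"
  have "(a, pl a) \<in> Rstar S m" using pl_props[OF a] pl0[OF a] a ssub unfolding star_subsemigroup_def by blast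
  then show ?thesis using xy unfolding Rstar_def by blast
qed
lemma stL: "a \<in> S0 \<Longrightarrow> x \<in> S \<Longrightarrow> y \<in> S \<Longrightarrow> a \<cdot> x = a \<cdot> y \<longleftrightarrow> st a \<cdot> x = st a \<cdot> y"
proof -
  assume a: "a \<in> S0" and xy: "x \<in> S" "y \<in> S"
  have "(a, st a) \<in> Lstar S m" using st_props[OF a] st0[OF a] a ssub unfolding star_subsemigroup_def by blast
  then show ?thesis using xy unfolding Lstar_def by blast
qed

lemma GL: "e \<in> S \<Longrightarrow> g \<in> S \<Longrightarrow> e \<cdot> e = e \<Longrightarrow> g \<cdot> g = g \<Longrightarrow>
   (e, g) \<in> GreenL S m \<longleftrightarrow> e \<cdot> g = e \<and> g \<cdot> e = g"
proof -
  assume h: "e \<in> S" "g \<in> S" "e \<cdot> e = e" "g \<cdot> g = g"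
  have 1: "e \<cdot> g = e" if "s \<in> S" "e = s \<cdot> g" for s using that h assoc[of s g g] by simp
  have 2: "g \<cdot> e = g" if "s \<in> S" "g = s \<cdot> e" for s using that h assoc[of s e e] by simp
  show ?thesis
  proof
    assume "(e, g) \<in> GreenL S m"
    then have "(e = g \<or> (\<exists>s\<in>S. e = s \<cdot> g)) \<and> (g = e \<or> (\<exists>t\<in>S. g = t \<cdot> e))" unfolding GreenL_def by blast
    then have d1: "e = g \<or> (\<exists>s\<in>S. e = s \<cdot> g)" and d2: "g = e \<or> (\<exists>t\<in>S. g = t \<cdot> e)" by blast+
    have "e \<cdot> g = e" using d1
    proof
      assume "e = g" then show ?thesis using h by simp
    next
      assume "\<exists>s\<in>S. e = s \<cdot> g" then obtain s where "s \<in> S" "e = s \<cdot> g" by blast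
      then show ?thesis by (rule 1)
    qed
    moreover have "g \<cdot> e = g" using d2
    proof
      assume "g = e" then show ?thesis using h by simp
    next
      assume "\<exists>t\<in>S. g = t \<cdot> e" then obtain t where "t \<in> S" "g = t \<cdot> e" by blast
      then show ?thesis by (rule 2)
    qed
    ultimately show "e \<cdot> g = e \<and> g \<cdot> e = g" by blast
  next
    assume "e \<cdot> g = e \<and> g \<cdot> e = g"
    then have "\<exists>s\<in>S. e = s \<cdot> g" "\<exists>t\<in>S. g = t \<cdot> e" using h by (metis)+
    then show "(e, g) \<in> GreenL S m" unfolding GreenL_def using h by blast
  qed
qed
lemma GR: "e \<in> S \<Longrightarrow> g \<in> S \<Longrightarrow> e \<cdot> e = e \<Longrightarrow> g \<cdot> g = g \<Longrightarrow>
   (e, g) \<in> GreenR S m \<longleftrightarrow> g \<cdot> e = e \<and> e \<cdot> g = g"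
proof -
  assume h: "e \<in> S" "g \<in> S" "e \<cdot> e = e" "g \<cdot> g = g"
  have 1: "g \<cdot> e = e" if "s \<in> S" "e = g \<cdot> s" for s using that h assoc[of g g s] by simp
  have 2: "e \<cdot> g = g" if "s \<in> S" "g = e \<cdot> s" for s using that h assoc[of e e s] by simp
  show ?thesis
  proof
    assume "(e, g) \<in> GreenR S m"
    then have "(e = g \<or> (\<exists>s\<in>S. e = g \<cdot> s)) \<and> (g = e \<or> (\<exists>t\<in>S. g = e \<cdot> t))" unfolding GreenR_def by blast
    then have d1: "e = g \<or> (\<exists>s\<in>S. e = g \<cdot> s)" and d2: "g = e \<or> (\<exists>t\<in>S. g = e \<cdot> t)" by blast+
    have "g \<cdot> e = e" using d1
    proof
      assume "e = g" then show ?thesis using h by simp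
    next
      assume "\<exists>s\<in>S. e = g \<cdot> s" then obtain s where "s \<in> S" "e = g \<cdot> s" by blast
      then show ?thesis by (rule 1)
    qed
    moreover have "e \<cdot> g = g" using d2
    proof
      assume "g = e" then show ?thesis using h by simp
    next
      assume "\<exists>t\<in>S. g = e \<cdot> t" then obtain t where "t \<in> S" "g = e \<cdot> t" by blast
      then show ?thesis by (rule 2)
    qed
    ultimately show "g \<cdot> e = e \<and> e \<cdot> g = g" by blast
  next
    assume "g \<cdot> e = e \<and> e \<cdot> g = g"
    then have "\<exists>s\<in>S. e = g \<cdot> s" "\<exists>t\<in>S. g = e \<cdot> t" using h by (metis)+
    then show "(e, g) \<in> GreenR S m" unfolding GreenR_def using h by blast
  qed
qed

end

context QT begin

lemma td_props:
  assumes "td x w e f"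
  shows "w \<in> S0" "w \<in> S" "e \<in> S" "f \<in> S" "e \<cdot> e = e" "f \<cdot> f = f" "x = e \<cdot> w \<cdot> f"
    "e \<cdot> pl w = e" "pl w \<cdot> e = pl w" "st w \<cdot> f = f" "f \<cdot> st w = st w"
proof -
  have h: "w \<in> S0" "e \<in> idems S m" "f \<in> idems S m" "x = e \<cdot> w \<cdot> f"
    "(e, pl w) \<in> GreenL S m" "(f, st w) \<in> GreenR S m"
    using assms unfolding transversal_decomp_def by blast+
  show "w \<in> S0" "w \<in> S" "e \<in> S" "f \<in> S" "e \<cdot> e = e" "f \<cdot> f = f" "x = e \<cdot> w \<cdot> f"
    using h S0S unfolding idems_def by auto
  have "e \<cdot> pl w = e \<and> pl w \<cdot> e = pl w"
    using GL[of e "pl w"] h plS pl_idem unfolding idems_def by blast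
  then show "e \<cdot> pl w = e" "pl w \<cdot> e = pl w" by blast+
  have "st w \<cdot> f = f \<and> f \<cdot> st w = st w"
    using GR[of f "st w"] h stS st_idem unfolding idems_def by blast
  then show "st w \<cdot> f = f" "f \<cdot> st w = st w" by blast+
qed

lemma td_intro:
  assumes "w \<in> S0" "e \<in> S" "f \<in> S" "e \<cdot> e = e" "f \<cdot> f = f" "x = e \<cdot> w \<cdot> f"
    "e \<cdot> pl w = e" "pl w \<cdot> e = pl w" "st w \<cdot> f = f" "f \<cdot> st w = st w"
  shows "td x w e f"
proof -
  have "(e, pl w) \<in> GreenL S m" using GL[of e "pl w"] assms plS pl_idem by blast
  moreover have "(f, st w) \<in> GreenR S m" using GR[of f "st w"] assms stS st_idem by blast
  ultimately show ?thesis using assms unfolding transversal_decomp_def idems_def by blast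
qed

lemma lc: "a \<cdot> b = c \<Longrightarrow> a \<in> S \<Longrightarrow> b \<in> S \<Longrightarrow> X \<in> S \<Longrightarrow> a \<cdot> (b \<cdot> X) = c \<cdot> X"
  by (metis assoc)

lemma ef_unique:
  assumes a: "td x w e f" and b: "td x w e' f'"
  shows "e = e' \<and> f = f'"
proof -
  note A = td_props[OF a] and B = td_props[OF b]
  have plw: "pl w \<in> S" "st w \<in> S" using A(1) plS stS by auto
  have "pl w \<cdot> x = w \<cdot> f" using A plw pl_a[OF A(1)]
    by (simp add: assoc lc[OF A(9)] lc[OF pl_a[OF A(1)]])
  moreover have "pl w \<cdot> x = w \<cdot> f'" using B plw pl_a[OF A(1)] A(7)
    by (simp add: assoc lc[OF B(9)] lc[OF pl_a[OF A(1)]])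
  ultimately have "w \<cdot> f = w \<cdot> f'" by simp
  then have "st w \<cdot> f = st w \<cdot> f'" using stL[OF A(1) A(4) B(4)] by blast
  then have ff: "f = f'" using A(10) B(10) by metis
  have "x \<cdot> st w = e \<cdot> w" using A plw a_st[OF A(1)]
    by (simp add: assoc lc[OF A(11)] lc[OF a_st[OF A(1)]])
  moreover have "x \<cdot> st w = e' \<cdot> w" using B plw a_st[OF A(1)] A(7)
    by (simp add: assoc lc[OF B(11)] lc[OF a_st[OF A(1)]])
  ultimately have "e \<cdot> w = e' \<cdot> w" by simp
  then have "e \<cdot> pl w = e' \<cdot> pl w" using plR[OF A(1) A(3) B(3)] by blast
  then have "e = e'" using A(8) B(8) by metis
  with ff show ?thesis by blast
qed

lemma td_unique:
  assumes x: "x \<in> S" and d: "td x w e f"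
  shows "bar x = w" "ee x = e" "ff x = f"
proof -
  show bw: "bar x = w" unfolding tbar_def using uniq[OF x] d by (intro the1_equality) blast+
  show "ee x = e" unfolding te_def bw using d ef_unique by (intro the_equality) blast+
  show "ff x = f" unfolding tf_def bw using d ef_unique by (intro the_equality) blast+
qed

lemma td_ex: assumes x: "x \<in> S" shows "td x (bar x) (ee x) (ff x)"
proof -
  obtain w e f where d: "td x w e f" using uniq[OF x] by blast
  show ?thesis using td_unique[OF x d] d by simp
qed

lemma S0_td: assumes w: "w \<in> S0" shows "td w w (pl w) (st w)"
proof (rule td_intro)
  show "w = pl w \<cdot> w \<cdot> st w" using w pl_a a_st by simp
qed (use w plS stS pl_idem st_idem in auto)

lemma S0_bar: "w \<in> S0 \<Longrightarrow> bar w = w" "w \<in> S0 \<Longrightarrow> ee w = pl w" "w \<in> S0 \<Longrightarrow> ff w = st w"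
  using td_unique[OF S0S S0_td] by auto

end

context QT begin

definition phi :: "'a \<times> 'a \<Rightarrow> 'a" where "phi p = ee (fst p) \<cdot> snd p"

lemma L_char: assumes "x \<in> Lset S0 S m"
  shows "x \<in> S" "ff x = st (bar x)" "x = ee x \<cdot> bar x"
proof -
  show x: "x \<in> S" using assms by (simp add: Lset_def)
  note D = td_props[OF td_ex[OF x]]
  show f: "ff x = st (bar x)" using assms S0_bar D(1) by (simp add: Lset_def)
  show "x = ee x \<cdot> bar x" using D f a_st[OF D(1)] by (simp add: assoc)
qed

lemma R_char: assumes "a \<in> Rset S0 S m"
  shows "a \<in> S" "ee a = pl (bar a)" "a = bar a \<cdot> ff a"
proof -
  show a: "a \<in> S" using assms by (simp add: Rset_def)
  note D = td_props[OF td_ex[OF a]]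
  show e: "ee a = pl (bar a)" using assms S0_bar D(1) by (simp add: Rset_def)
  show "a = bar a \<cdot> ff a" using D e pl_a[OF D(1)] by (simp add: assoc[symmetric])
qed

lemma phi_td: assumes p: "(x, a) \<in> Tset S0 S m"
  shows "td (phi (x, a)) (bar x) (ee x) (ff a)"
proof -
  have xL: "x \<in> Lset S0 S m" and aR: "a \<in> Rset S0 S m" and ba: "bar x = bar a"
    using p by (auto simp: Tset_def)
  note X = L_char[OF xL] and A = R_char[OF aR]
  note DX = td_props[OF td_ex[OF X(1)]] and DA = td_props[OF td_ex[OF A(1)]]
  show ?thesis
  proof (rule td_intro)
    show "phi (x, a) = ee x \<cdot> bar x \<cdot> ff a"
      unfolding phi_def using A(3) ba DX DA by (simp add: assoc)
  qed (use DX DA ba in auto)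
qed

lemma phi_inj: "inj_on phi (Tset S0 S m)"
proof (rule inj_onI)
  fix p q assume p: "p \<in> Tset S0 S m" and q: "q \<in> Tset S0 S m" and e: "phi p = phi q"
  obtain x a where pp: "p = (x, a)" by (cases p)
  obtain y b where qq: "q = (y, b)" by (cases q)
  have P: "td (phi p) (bar x) (ee x) (ff a)" using phi_td p pp by simp
  have Q: "td (phi p) (bar y) (ee y) (ff b)" using phi_td q qq e by simp
  have pS: "phi p \<in> S" using td_props(2,3,4,7)[OF P] by simp
  have 1: "bar x = bar y" "ee x = ee y" "ff a = ff b"
    using td_unique[OF pS P] td_unique[OF pS Q] by auto
  have xL: "x \<in> Lset S0 S m" "a \<in> Rset S0 S m" "bar x = bar a" using p pp by (auto simp: Tset_def)
  have yL: "y \<in> Lset S0 S m" "b \<in> Rset S0 S m" "bar y = bar b" using q qq by (auto simp: Tset_def)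
  have "x = y" using L_char(3)[OF xL(1)] L_char(3)[OF yL(1)] 1 by metis
  moreover have "a = b" using R_char(3)[OF xL(2)] R_char(3)[OF yL(2)] 1 xL(3) yL(3) by metis
  ultimately show "p = q" using pp qq by simp
qed

lemma phi_surj: "phi ` Tset S0 S m = S"
proof
  show "phi ` Tset S0 S m \<subseteq> S"
  proof
    fix s assume "s \<in> phi ` Tset S0 S m"
    then obtain x a where p: "(x, a) \<in> Tset S0 S m" "s = phi (x, a)" by auto
    show "s \<in> S" using td_props(2,3,4,7)[OF phi_td[OF p(1)]] p(2) by simp
  qed
next
  show "S \<subseteq> phi ` Tset S0 S m"
  proof
    fix s assume s: "s \<in> S"
    define w e f where "w = bar s" "e = ee s" "f = ff s"
    note D = td_props[OF td_ex[OF s], folded w_e_f_def]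
    have w: "w \<in> S0" "w \<in> S" using D by auto
    define x a where "x = e \<cdot> w" "a = w \<cdot> f"
    have xS: "x \<in> S" and aS: "a \<in> S" using D x_a_def by auto
    have tx: "td x w e (st w)"
      by (rule td_intro) (use D w stS st_idem a_st x_a_def in \<open>auto simp: assoc\<close>)
    have ta: "td a w (pl w) f"
      by (rule td_intro) (use D w plS pl_idem pl_a x_a_def in \<open>auto simp: assoc[symmetric]\<close>)
    note TX = td_unique[OF xS tx] and TA = td_unique[OF aS ta]
    have "x \<in> Lset S0 S m" using xS TX S0_bar w by (simp add: Lset_def)
    moreover have "a \<in> Rset S0 S m" using aS TA S0_bar w by (simp add: Rset_def)
    ultimately have T: "(x, a) \<in> Tset S0 S m" using TX TA by (simp add: Tset_def)
    have "phi (x, a) = s" unfolding phi_def using TX D x_a_def by (simp add: assoc)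
    then show "s \<in> phi ` Tset S0 S m" using T by force
  qed
qed

end

context QT begin

lemma mult_T:
  assumes p: "(x, a) \<in> Tset S0 S m" and q: "(y, b) \<in> Tset S0 S m"
  shows "Tmult S0 S m (x, a) (y, b) \<in> Tset S0 S m \<and>
         phi (Tmult S0 S m (x, a) (y, b)) = phi (x, a) \<cdot> phi (y, b)"
proof -
  have xL: "x \<in> Lset S0 S m" and aR: "a \<in> Rset S0 S m" and ba: "bar x = bar a"
    using p by (auto simp: Tset_def)
  have yL: "y \<in> Lset S0 S m" and bR: "b \<in> Rset S0 S m" and bb: "bar y = bar b"
    using q by (auto simp: Tset_def)
  note X = L_char[OF xL] and A = R_char[OF aR] and Y = L_char[OF yL] and B = R_char[OF bR]
  define w v e1 f1 e2 f2 where "w = bar x" "v = bar y" "e1 = ee x" "f1 = ff a" "e2 = ee y" "f2 = ff b"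
  note DX = td_props[OF td_ex[OF X(1)], folded w_v_e1_f1_e2_f2_def]
  note DA = td_props[OF td_ex[OF A(1)], folded ba, folded w_v_e1_f1_e2_f2_def]
  note DY = td_props[OF td_ex[OF Y(1)], folded w_v_e1_f1_e2_f2_def]
  note DB = td_props[OF td_ex[OF B(1)], folded bb, folded w_v_e1_f1_e2_f2_def]
  have w0: "w \<in> S0" and v0: "v \<in> S0" using DX DY by auto
  have wS: "w \<in> S" and vS: "v \<in> S" using w0 v0 S0S by auto
  have S: "e1 \<in> S" "f1 \<in> S" "e2 \<in> S" "f2 \<in> S" using DX DA DY DB by auto
  have xe: "x = e1 \<cdot> w" using X(3) w_v_e1_f1_e2_f2_def by simp
  have ae: "a = w \<cdot> f1" using A(3) ba w_v_e1_f1_e2_f2_def by simp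
  have ye: "y = e2 \<cdot> v" using Y(3) w_v_e1_f1_e2_f2_def by simp
  have be: "b = v \<cdot> f2" using B(3) bb w_v_e1_f1_e2_f2_def by simp
  have aS: "a \<in> S" and yS: "y \<in> S" using A(1) Y(1) by auto
  define z where "z = a \<cdot> y"
  have zw: "z = w \<cdot> (f1 \<cdot> e2) \<cdot> v" unfolding z_def ae ye using wS vS S by (simp add: assoc)
  have z0: "z \<in> S0" unfolding zw using qi w0 v0 S by simp
  have zS: "z \<in> S" using z0 S0S by auto
  have pw: "pl w \<in> S" "pl w \<in> idems S0 m" "st v \<in> S" "st v \<in> idems S0 m" using w0 v0 plS plI stS stI by auto
  have pz: "pl z \<in> S" "pl z \<in> idems S0 m" "st z \<in> S" "st z \<in> idems S0 m" using z0 plS plI stS stI by auto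
  have plwz: "pl w \<cdot> z = z" unfolding zw using wS vS S pw pl_a[OF w0]
    by (simp add: assoc lc[OF pl_a[OF w0]])
  have zstv: "z \<cdot> st v = z" unfolding zw using wS vS S pw a_st[OF v0]
    by (simp add: assoc)
  have P1: "pl w \<cdot> pl z = pl z"
    using plR[OF z0 pw(1) pz(1)] plwz pl_a[OF z0] pl_idem[OF z0] by simp
  have P2: "st z \<cdot> st v = st z"
    using stL[OF z0 pw(3) pz(3)] zstv a_st[OF z0] st_idem[OF z0] by simp
  have C1: "pl z \<cdot> pl w = pl z" using comm[OF pz(2) pw(2)] P1 by simp
  have C2: "st v \<cdot> st z = st z" using comm[OF pz(4) pw(4)] P2 by simp
  have Q1: "pl z \<cdot> e1 = pl z"
  proof -
    have "pl z \<cdot> e1 = (pl z \<cdot> pl w) \<cdot> e1" using C1 by simp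
    also have "\<dots> = pl z \<cdot> (pl w \<cdot> e1)" using pz pw S by (simp add: assoc)
    also have "\<dots> = pl z" using DX(9) C1 by simp
    finally show ?thesis .
  qed
  have Q2: "f2 \<cdot> st z = st z"
  proof -
    have "f2 \<cdot> st z = f2 \<cdot> (st v \<cdot> st z)" using C2 by simp
    also have "\<dots> = (f2 \<cdot> st v) \<cdot> st z" using pz pw S by (simp add: assoc)
    also have "\<dots> = st z" using DB(11) C2 by simp
    finally show ?thesis .
  qed
  define g h where "g = e1 \<cdot> pl z" "h = st z \<cdot> f2"
  have gS: "g \<in> S" "h \<in> S" using g_h_def S pz by auto
  have g1: "g \<cdot> g = g" unfolding g_h_def using S pz
    by (simp add: assoc lc[OF Q1] pl_idem[OF z0])
  have g2: "g \<cdot> pl z = g" unfolding g_h_def using S pz by (simp add: assoc pl_idem[OF z0])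
  have g3: "pl z \<cdot> g = pl z" unfolding g_h_def using S pz by (simp add: assoc lc[OF Q1] pl_idem[OF z0])
  have h1: "h \<cdot> h = h" unfolding g_h_def using S pz
    by (simp add: assoc lc[OF Q2] lc[OF st_idem[OF z0]])
  have h2: "st z \<cdot> h = h" unfolding g_h_def using S pz by (simp add: assoc lc[OF st_idem[OF z0]])
  have h3: "h \<cdot> st z = st z" unfolding g_h_def using S pz by (simp add: assoc Q2 st_idem[OF z0])
  define u c where "u = e1 \<cdot> a \<cdot> y" "c = a \<cdot> y \<cdot> f2"
  have uz: "u = e1 \<cdot> z" unfolding u_c_def z_def using S aS yS by (simp add: assoc)
  have cz: "c = z \<cdot> f2" unfolding u_c_def z_def by simp
  have uS: "u \<in> S" and cS: "c \<in> S" using uz cz S zS by auto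
  have tu: "td u z g (st z)"
  proof (rule td_intro)
    show "u = g \<cdot> z \<cdot> st z" unfolding uz g_h_def using S pz zS a_st[OF z0] pl_a[OF z0]
      by (simp add: assoc)
  qed (use z0 gS pz g1 g2 g3 st_idem[OF z0] in auto)
  have tc: "td c z (pl z) h"
  proof (rule td_intro)
    show "c = pl z \<cdot> z \<cdot> h" unfolding cz g_h_def using S pz zS a_st[OF z0] pl_a[OF z0]
      by (simp add: assoc lc[OF a_st[OF z0]] lc[OF pl_a[OF z0]])
  qed (use z0 gS pz h1 h2 h3 pl_idem[OF z0] in auto)
  note TU = td_unique[OF uS tu] and TC = td_unique[OF cS tc]
  have "u \<in> Lset S0 S m" using uS TU S0_bar z0 by (simp add: Lset_def)
  moreover have "c \<in> Rset S0 S m" using cS TC S0_bar z0 by (simp add: Rset_def)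
  ultimately have T: "(u, c) \<in> Tset S0 S m" using TU TC by (simp add: Tset_def)
  have M: "Tmult S0 S m (x, a) (y, b) = (u, c)"
    unfolding Tmult_def u_c_def w_v_e1_f1_e2_f2_def by simp
  have "phi (u, c) = e1 \<cdot> z \<cdot> f2"
    unfolding phi_def using TU cz g_h_def S pz zS pl_a[OF z0]
    by (simp add: assoc lc[OF pl_a[OF z0]])
  moreover have "phi (x, a) \<cdot> phi (y, b) = e1 \<cdot> z \<cdot> f2"
  proof -
    have "phi (x, a) \<cdot> phi (y, b) = e1 \<cdot> a \<cdot> (e2 \<cdot> b)"
      unfolding phi_def w_v_e1_f1_e2_f2_def by simp
    also have "\<dots> = e1 \<cdot> (a \<cdot> (e2 \<cdot> v)) \<cdot> f2" unfolding be using S aS vS by (simp add: assoc)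
    finally show ?thesis using ye z_def by simp
  qed
  ultimately show ?thesis using M T by simp
qed

end

theorem lemma2p5:
  fixes S S0 :: "'a set" and m :: "'a \<Rightarrow> 'a \<Rightarrow> 'a"
  assumes "abundant S m"
    and "quasi_ideal_adequate_transversal S0 S m"
  shows "(\<forall>p\<in>Tset S0 S m. \<forall>q\<in>Tset S0 S m. Tmult S0 S m p q \<in> Tset S0 S m)
    \<and> abundant (Tset S0 S m) (Tmult S0 S m)
    \<and> (\<exists>\<phi>. bij_betw \<phi> (Tset S0 S m) S \<and>
         (\<forall>p\<in>Tset S0 S m. \<forall>q\<in>Tset S0 S m. \<phi> (Tmult S0 S m p q) = m (\<phi> p) (\<phi> q)))"
proof -
  interpret Q: QT S S0 m using assms by unfold_locales
  have both: "Tmult S0 S m p q \<in> Tset S0 S m \<and> Q.phi (Tmult S0 S m p q) = m (Q.phi p) (Q.phi q)"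
    if "p \<in> Tset S0 S m" "q \<in> Tset S0 S m" for p q
  proof -
    obtain x a where pp: "p = (x, a)" by (cases p)
    obtain y b where qq: "q = (y, b)" by (cases q)
    show ?thesis using Q.mult_T[of x a y b] that unfolding pp qq by blast
  qed
  have cl: "\<forall>p\<in>Tset S0 S m. \<forall>q\<in>Tset S0 S m. Tmult S0 S m p q \<in> Tset S0 S m" using both by blast
  have hom: "\<forall>p\<in>Tset S0 S m. \<forall>q\<in>Tset S0 S m. Q.phi (Tmult S0 S m p q) = m (Q.phi p) (Q.phi q)"
    using both by blast
  have bij: "bij_betw Q.phi (Tset S0 S m) S" using Q.phi_inj Q.phi_surj by (simp add: bij_betw_def)
  have ab: "abundant (Tset S0 S m) (Tmult S0 S m)"
    by (rule abundant_transfer[OF assms(1) bij cl hom])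
  show ?thesis
  proof (intro conjI cl ab)
    show "\<exists>\<phi>. bij_betw \<phi> (Tset S0 S m) S \<and>
         (\<forall>p\<in>Tset S0 S m. \<forall>q\<in>Tset S0 S m. \<phi> (Tmult S0 S m p q) = m (\<phi> p) (\<phi> q))"
      by (rule exI[of _ Q.phi]) (use bij hom in blast)
  qed
qed

end
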